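(* Fix an integer $d\geq 2$. Let $\gamma_d$ be the epicycloid \[ \gamma_d=\left\{ \frac{e^{id\theta}-de^{i\theta}}{d+1} : \theta\in[0,2\pi]\right\}\subset\overline{\mathbb{D}}. \] Then the relative boundary of $\widetilde{\mathcal{E}_d}$ in $\overline{\mathbb{D}}$ is the epicycloid $\gamma_d$.
   Context: $\mathbb{D}$ denotes the open unit disk. For $w\in\mathbb{D}$ let $B_w(z)=\left(\frac{z-w}{1-\overline{w}z}\right)^d$, a unicritical Blaschke product of degree $d$. By the Denjoy–Wolff theorem, a finite Blaschke product $B$ of degree at least $2$ has a unique point $z_0\in\overline{\mathbb{D}}$ (its Denjoy–Wolff point) such that $B^n(z)\to z_0$ for every $z\in\mathbb{D}$. $B$ is called elliptic if $z_0\in\mathbb{D}$; hyperbolic if $z_0\in\partial\mathbb{D}$ and $B'(z_0)<1$; parabolic if $z_0\in\partial\mathbb{D}$ and $B'(z_0)=1$. Let $S_d=\{w\in\mathbb{D}:\arg(w)\in[0,\tfrac{2\pi}{d-1})\}$, let $\mathcal{E}_d=\{w\in S_d: B_w \text{ is elliptic}\}$, and let $\widetilde{\mathcal{E}_d}=\bigcup_{j=0}^{d-2}R_j(\mathcal{E}_d)\subset\mathbb{D}$, where $R_j$ is the rotation of the plane about $0$ through angle $2\pi j/(d-1)$. *)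

theory Defs
  imports "HOL-Analysis.Analysis"
begin

definition blaschke :: "nat \<Rightarrow> complex \<Rightarrow> complex \<Rightarrow> complex" where
  "blaschke d w z = ((z - w) / (1 - cnj w * z)) ^ d"

text \<open>B is elliptic: its Denjoy--Wolff point lies in the open unit disk, i.e. there is
  z0 in the open disk with B^n(z) tending to z0 for every z in the open disk.\<close>
definition elliptic :: "(complex \<Rightarrow> complex) \<Rightarrow> bool" where
  "elliptic B \<longleftrightarrow> (\<exists>z0\<in>ball 0 1. \<forall>z\<in>ball 0 1. (\<lambda>n. (B ^^ n) z) \<longlonglongrightarrow> z0)"

definition sector :: "nat \<Rightarrow> complex set" where
  "sector d = {w \<in> ball 0 1. \<exists>t. 0 \<le> t \<and> t < 2 * pi / (real d - 1) \<and>
                                  w = complex_of_real (norm w) * cis t}"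

definition ellip_set :: "nat \<Rightarrow> complex set" where
  "ellip_set d = {w \<in> sector d. elliptic (blaschke d w)}"

definition ellip_tilde :: "nat \<Rightarrow> complex set" where
  "ellip_tilde d = (\<Union>j\<in>{0..d-2}. (\<lambda>w. cis (2 * pi * real j / (real d - 1)) * w) ` ellip_set d)"

definition epicycloid :: "nat \<Rightarrow> complex set" where
  "epicycloid d = (\<lambda>\<theta>. (cis (real d * \<theta>) - of_nat d * cis \<theta>) / (of_nat d + 1)) ` {0..2*pi}"

end

theory Submission imports Defs "HOL-Complex_Analysis.Complex_Analysis" begin

definition mob :: "complex \<Rightarrow> complex \<Rightarrow> complex" where
  "mob a z = (z - a) / (1 - cnj a * z)"

lemma sq_lt1: "0 \<le> (x::real) \<Longrightarrow> x < 1 \<Longrightarrow> x * x < 1"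
  using mult_strict_mono[of x 1 x 1] by simp

lemma mob_key: "(norm (1 - cnj a * z))^2 - (norm (z - a))^2 = (1 - (norm a)^2) * (1 - (norm z)^2)"
  unfolding cmod_power2 by (simp add: algebra_simps power2_eq_square)

lemma denom_nz: assumes "norm a < 1" "norm z \<le> 1" shows "1 - cnj a * z \<noteq> 0"
proof
  assume "1 - cnj a * z = 0"
  hence "cnj a * z = 1" by simp
  hence "norm a * norm z = 1" by (metis complex_mod_cnj norm_mult norm_one)
  moreover have "norm a * norm z \<le> norm a" using assms by (simp add: mult_left_le)
  hence "norm a * norm z < 1" using assms by linarith
  ultimately show False by simp
qed

lemma mob_in: assumes "norm a < 1" "norm z < 1" shows "norm (mob a z) < 1"
proof -
  have nz: "1 - cnj a * z \<noteq> 0" using denom_nz assms by simp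
  have "(norm (z - a))^2 < (norm (1 - cnj a * z))^2"
  proof -
    have "(norm a)^2 < 1" "(norm z)^2 < 1" using assms by (auto simp: power_less_one_iff)
    hence "(1 - (norm a)^2) * (1 - (norm z)^2) > 0" by simp
    thus ?thesis using mob_key[of a z] by linarith
  qed
  hence "norm (z - a) < norm (1 - cnj a * z)" by (simp add: power_less_imp_less_base)
  thus ?thesis using nz unfolding mob_def by (simp add: norm_divide divide_less_eq)
qed

lemma mob_inv: assumes "norm a < 1" "norm z \<le> 1" shows "mob (-a) (mob a z) = z"
proof -
  have nz: "1 - cnj a * z \<noteq> 0" using denom_nz assms by simp
  have na: "cnj a * a \<noteq> 1"
  proof
    assume "cnj a * a = 1" hence "norm (cnj a * a) = 1" by simp
    hence "norm a * norm a = 1" by (simp add: norm_mult)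
    moreover have "norm a * norm a < 1" using assms(1) sq_lt1 by simp
    ultimately show False by simp
  qed
  have na': "1 - cnj a * a \<noteq> 0" using na by simp
  have e1: "1 + cnj a * mob a z = (1 - cnj a * a) / (1 - cnj a * z)"
    using nz unfolding mob_def by (simp add: field_simps)
  have e2: "mob a z + a = z * (1 - cnj a * a) / (1 - cnj a * z)"
    using nz unfolding mob_def by (simp add: field_simps)
  have "mob (-a) (mob a z) = (mob a z + a) / (1 + cnj a * mob a z)"
    by (simp add: mob_def)
  also have "\<dots> = (z * (1 - cnj a * a) / (1 - cnj a * z)) / ((1 - cnj a * a) / (1 - cnj a * z))"
    by (simp only: e1 e2)
  also have "\<dots> = z" using nz na' by simp
  finally show ?thesis .
qed

lemma mob_holo: assumes "norm a < 1" shows "mob a holomorphic_on ball 0 1"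
  unfolding mob_def using denom_nz[OF assms] by (intro holomorphic_intros) auto

lemma mob_cont: assumes "norm a < 1" shows "continuous_on (cball 0 1) (mob a)"
  unfolding mob_def using denom_nz[OF assms] by (intro continuous_intros) auto


lemma mob_zero: "mob a 0 = - a" "mob a a = 0" by (simp_all add: mob_def)

lemma bl_in: assumes "norm w < 1" "norm z < 1" "d \<ge> 1" shows "norm (blaschke d w z) < 1"
proof -
  have "norm (mob w z) < 1" using mob_in assms by simp
  thus ?thesis unfolding blaschke_def mob_def[symmetric] norm_power
    using assms(3) by (simp add: power_less_one_iff)
qed


lemma bl_mob: "blaschke d w z = (mob w z)^d" by (simp add: blaschke_def mob_def)

lemma bl_holo: assumes "norm w < 1" shows "blaschke d w holomorphic_on ball 0 1"
  unfolding bl_mob[abs_def] using mob_holo[OF assms]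
  by (intro holomorphic_intros) (simp add: holomorphic_on_def)

lemma bl_cont: assumes "norm w < 1" shows "continuous_on (cball 0 1) (blaschke d w)"
  unfolding bl_mob[abs_def] using mob_cont[OF assms] by (intro continuous_intros)

lemma bl_not_inj: assumes "norm w < 1" "d \<ge> 2"
  shows "\<exists>z1 z2. norm z1 < 1 \<and> norm z2 < 1 \<and> z1 \<noteq> z2 \<and> blaschke d w z1 = blaschke d w z2"
proof -
  define u1 :: complex where "u1 = 1/2"
  define u2 where "u2 = cis (2*pi / real d) / 2"
  have n1: "norm u1 < 1" "norm u2 < 1" by (simp_all add: u1_def u2_def norm_divide)
  have "cis (2*pi / real d) ^ d = cis (real d * (2*pi / real d))" by (rule Complex.DeMoivre)
  also have "\<dots> = 1" using assms(2) by simp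
  finally have "u1 ^ d = u2 ^ d" unfolding u1_def u2_def
    by (simp add: power_divide)
  have "cis (2*pi / real d) \<noteq> 1"
  proof
    assume "cis (2*pi / real d) = 1"
    hence "cos (2*pi / real d) = 1" by (metis cis.sel(1) one_complex.simps(1))
    moreover have "0 < 2*pi / real d" "2*pi / real d < 2*pi" using assms(2) by (auto simp: field_simps)
    ultimately obtain n::int where n: "2*pi / real d = n * (2*pi)" "0 < n * (2*pi)" "n * (2*pi) < 2*pi"
      using cos_one_2pi_int[of "2*pi / real d"] by auto
    hence "0 < n" "n < 1" by (auto simp: zero_less_mult_iff)
    thus False by simp
  qed
  hence "u1 \<noteq> u2" unfolding u1_def u2_def by auto
  define z1 where "z1 = mob (-w) u1"
  define z2 where "z2 = mob (-w) u2"
  have m: "mob w (mob (-w) u) = u" if "norm u < 1" for u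
    using mob_inv[of "-w" u] assms that by simp
  have "norm z1 < 1" "norm z2 < 1" unfolding z1_def z2_def using mob_in n1 assms by auto
  moreover have "z1 \<noteq> z2" using m n1 \<open>u1 \<noteq> u2\<close> unfolding z1_def z2_def by metis
  moreover have "blaschke d w z1 = blaschke d w z2" unfolding bl_mob z1_def z2_def
    using m n1 \<open>u1 ^ d = u2 ^ d\<close> by simp
  ultimately show ?thesis by blast
qed


definition conjf :: "nat \<Rightarrow> complex \<Rightarrow> complex \<Rightarrow> complex \<Rightarrow> complex" where
  "conjf d w z0 y = mob z0 (blaschke d w (mob (-z0) y))"

lemma conjf_basic:
  assumes "norm w < 1" "norm z0 < 1" "d \<ge> 1"
  shows "conjf d w z0 holomorphic_on ball 0 1" "continuous_on (ball 0 1) (conjf d w z0)"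
    "\<And>y. norm y < 1 \<Longrightarrow> norm (conjf d w z0 y) < 1"
proof -
  have nz: "norm (-z0) < 1" using assms by simp
  have m1: "mob (-z0) ` ball 0 1 \<subseteq> ball 0 1" using mob_in[OF nz] by auto
  have m2: "blaschke d w ` ball 0 1 \<subseteq> ball 0 1" using bl_in[OF assms(1) _ assms(3)] by auto
  have h1: "(blaschke d w \<circ> mob (-z0)) holomorphic_on ball 0 1"
    by (rule holomorphic_on_compose_gen[OF mob_holo[OF nz] bl_holo[OF assms(1)] m1])
  have h2: "(mob z0 \<circ> (blaschke d w \<circ> mob (-z0))) holomorphic_on ball 0 1"
    by (rule holomorphic_on_compose_gen[OF h1 mob_holo[OF assms(2)]]) (use m1 m2 in auto)
  show h: "conjf d w z0 holomorphic_on ball 0 1" using h2 unfolding conjf_def[abs_def] o_def .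
  show "continuous_on (ball 0 1) (conjf d w z0)" using holomorphic_on_imp_continuous_on[OF h] .
  show "\<And>y. norm y < 1 \<Longrightarrow> norm (conjf d w z0 y) < 1"
    unfolding conjf_def using mob_in[OF nz] bl_in[OF assms(1) _ assms(3)] mob_in[OF assms(2)] by auto
qed

lemma conjf_strict:
  assumes "norm w < 1" "norm z0 < 1" "d \<ge> 2" "blaschke d w z0 = z0"
  shows "conjf d w z0 0 = 0" "\<And>y. norm y < 1 \<Longrightarrow> y \<noteq> 0 \<Longrightarrow> norm (conjf d w z0 y) < norm y"
proof -
  have d1: "d \<ge> 1" using assms by simp
  note b = conjf_basic[OF assms(1,2) d1]
  show f0: "conjf d w z0 0 = 0" unfolding conjf_def using assms(4) by (simp add: mob_zero)
  have inv: "conjf d w z0 (mob z0 z) = mob z0 (blaschke d w z)" if "norm z < 1" for z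
    unfolding conjf_def using mob_inv[OF assms(2), of z] that by simp
  show "norm (conjf d w z0 y) < norm y" if y: "norm y < 1" "y \<noteq> 0" for y
  proof (rule ccontr)
    assume "\<not> norm (conjf d w z0 y) < norm y"
    moreover have "norm (conjf d w z0 y) \<le> norm y"
      using Schwarz_Lemma(1)[OF b(1) f0 b(3) y(1)] .
    ultimately have "norm (conjf d w z0 y) = norm y" by simp
    then obtain \<alpha> where al: "\<And>z. norm z < 1 \<Longrightarrow> conjf d w z0 z = \<alpha> * z" "norm \<alpha> = 1"
      using Schwarz_Lemma(3)[OF b(1) f0 b(3) y(1)] y by blast
    obtain z1 z2 where z: "norm z1 < 1" "norm z2 < 1" "z1 \<noteq> z2" "blaschke d w z1 = blaschke d w z2"
      using bl_not_inj[OF assms(1,3)] by blast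
    have "\<alpha> * mob z0 z1 = \<alpha> * mob z0 z2"
      using inv[of z1] inv[of z2] z al(1)[of "mob z0 z1"] al(1)[of "mob z0 z2"] mob_in[OF assms(2)] by auto
    hence "mob z0 z1 = mob z0 z2" using al(2) by auto
    hence "mob (-z0) (mob z0 z1) = mob (-z0) (mob z0 z2)" by simp
    thus False using mob_inv[OF assms(2)] z by simp
  qed
qed


lemma iter_to_zero:
  fixes f :: "complex \<Rightarrow> complex"
  assumes cont: "continuous_on (ball 0 1) f" and f0: "f 0 = 0"
    and lt: "\<And>y. norm y < 1 \<Longrightarrow> y \<noteq> 0 \<Longrightarrow> norm (f y) < norm y"
    and y: "norm y < 1"
  shows "(\<lambda>n. (f ^^ n) y) \<longlonglongrightarrow> 0"
proof -
  have le: "norm (f z) \<le> norm z" if "norm z < 1" for z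
    using lt[of z] that f0 by (cases "z = 0") auto
  define a where "a n = norm ((f ^^ n) y)" for n
  have a_y: "a n \<le> norm y" for n
  proof (induction n)
    case 0 thus ?case by (simp add: a_def)
  next
    case (Suc n)
    have "a (Suc n) = norm (f ((f ^^ n) y))" by (simp add: a_def)
    also have "\<dots> \<le> a n" unfolding a_def using le Suc y a_def by simp
    finally show ?case using Suc by simp
  qed
  have a_le: "a (Suc n) \<le> a n" for n
  proof -
    have "a (Suc n) = norm (f ((f ^^ n) y))" by (simp add: a_def)
    also have "\<dots> \<le> a n" unfolding a_def using le a_y[of n] y a_def by simp
    finally show ?thesis .
  qed
  have "decseq a" using a_le by (simp add: decseq_SucI)
  then obtain L where L: "a \<longlonglongrightarrow> L" "\<forall>i. L \<le> a i"
    using decseq_convergent[of a 0] unfolding a_def by auto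
  have L0: "L \<le> 0"
  proof (rule ccontr)
    assume "\<not> L \<le> 0"
    hence Lp: "L > 0" by simp
    define K where "K = cball (0::complex) (norm y) - ball 0 L"
    have Kc: "compact K" unfolding K_def by (intro compact_diff) auto
    have Kne: "y \<in> K" unfolding K_def using L(2)[rule_format, of 0] by (simp add: a_def)
    have Kb: "K \<subseteq> ball 0 1" unfolding K_def using y by auto
    have Kn: "\<And>z. z \<in> K \<Longrightarrow> norm z \<ge> L" unfolding K_def by auto
    have hc: "continuous_on K (\<lambda>z. norm (f z) / norm z)"
      using continuous_on_subset[OF cont Kb] Kn Lp
      by (intro continuous_intros) (auto, fastforce)
    obtain x where x: "x \<in> K" "\<And>z. z \<in> K \<Longrightarrow> norm (f z) / norm z \<le> norm (f x) / norm x"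
      using continuous_attains_sup[OF Kc _ hc] Kne by blast
    define c where "c = norm (f x) / norm x"
    have xn: "x \<noteq> 0" "norm x < 1" using x(1) Kn Lp Kb by fastforce+
    have c1: "c < 1" "0 \<le> c" unfolding c_def using lt[OF xn(2) xn(1)] xn by auto
    have step: "a (Suc n) \<le> c * a n" for n
    proof -
      have zK: "(f ^^ n) y \<in> K" unfolding K_def using a_y[of n] L(2)[rule_format, of n] by (auto simp: a_def)
      have "norm ((f ^^ n) y) > 0" using Kn[OF zK] Lp by linarith
      hence "norm (f ((f ^^ n) y)) \<le> c * norm ((f ^^ n) y)"
        using x(2)[OF zK] unfolding c_def by (simp add: divide_le_eq)
      thus ?thesis by (simp add: a_def)
    qed
    have pw: "a n \<le> c ^ n * norm y" for n
    proof (induction n)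
      case 0 thus ?case by (simp add: a_def)
    next
      case (Suc n)
      have "a (Suc n) \<le> c * a n" by (rule step)
      also have "\<dots> \<le> c * (c ^ n * norm y)" using Suc c1 by (simp add: mult_left_mono)
      finally show ?case by simp
    qed
    have "(\<lambda>n. c ^ n * norm y) \<longlonglongrightarrow> 0 * norm y"
      by (intro tendsto_intros) (use c1 in simp)
    hence "L \<le> 0" using L(2) pw by (intro LIMSEQ_le_const[where X="\<lambda>n. c ^ n * norm y"]) (auto intro: order_trans)
    thus False using Lp by simp
  qed
  have "L = 0" using L0 L(2) a_def by (metis norm_ge_zero antisym order.trans L(1) LIMSEQ_le_const)
  hence "(\<lambda>n. norm ((f ^^ n) y)) \<longlonglongrightarrow> 0" using L(1) unfolding a_def by simp
  thus ?thesis by (simp add: tendsto_norm_zero_iff)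
qed


lemma iter_conj:
  assumes "norm w < 1" "norm z0 < 1" "d \<ge> 1" "norm z < 1"
  shows "norm ((conjf d w z0 ^^ n) (mob z0 z)) < 1 \<and>
         (blaschke d w ^^ n) z = mob (-z0) ((conjf d w z0 ^^ n) (mob z0 z))"
proof (induction n)
  case 0 thus ?case using mob_in[OF assms(2,4)] mob_inv[OF assms(2), of z] assms(4) by simp
next
  case (Suc n)
  define Y where "Y = (conjf d w z0 ^^ n) (mob z0 z)"
  have Y: "norm Y < 1" using Suc Y_def by simp
  have nz: "norm (-z0) < 1" using assms by simp
  have a: "norm (mob (-z0) Y) < 1" using mob_in[OF nz Y] .
  have b: "norm (blaschke d w (mob (-z0) Y)) < 1" using bl_in[OF assms(1) a assms(3)] .
  have "norm ((conjf d w z0 ^^ Suc n) (mob z0 z)) < 1"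
    using conjf_basic(3)[OF assms(1-3) Y] by (simp add: Y_def)
  moreover have "(blaschke d w ^^ Suc n) z = blaschke d w (mob (-z0) Y)"
    using Suc Y_def by simp
  moreover have "mob (-z0) ((conjf d w z0 ^^ Suc n) (mob z0 z)) = blaschke d w (mob (-z0) Y)"
    using mob_inv[OF assms(2), of "blaschke d w (mob (-z0) Y)"] b by (simp add: Y_def conjf_def)
  ultimately show ?case by simp
qed

lemma elliptic_iff:
  assumes "norm w < 1" "d \<ge> 2"
  shows "elliptic (blaschke d w) \<longleftrightarrow> (\<exists>z0\<in>ball 0 1. blaschke d w z0 = z0)"
proof
  have d1: "d \<ge> 1" using assms by simp
  have ic: "isCont (blaschke d w) z" if "norm z < 1" for z
    using holomorphic_on_imp_continuous_on[OF bl_holo[OF assms(1)]] that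
    by (simp add: continuous_on_eq_continuous_at)
  assume "elliptic (blaschke d w)"
  then obtain z0 where z0: "z0 \<in> ball 0 1" "(\<lambda>n. (blaschke d w ^^ n) 0) \<longlonglongrightarrow> z0"
    unfolding elliptic_def by force
  have "(\<lambda>n. blaschke d w ((blaschke d w ^^ n) 0)) \<longlonglongrightarrow> blaschke d w z0"
    using isCont_tendsto_compose[OF ic z0(2)] z0(1) by simp
  moreover have "(\<lambda>n. blaschke d w ((blaschke d w ^^ n) 0)) \<longlonglongrightarrow> z0"
    using LIMSEQ_Suc[OF z0(2)] by simp
  ultimately show "\<exists>z0\<in>ball 0 1. blaschke d w z0 = z0" using z0(1) LIMSEQ_unique by blast
next
  have d1: "d \<ge> 1" using assms by simp
  assume "\<exists>z0\<in>ball 0 1. blaschke d w z0 = z0"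
  then obtain z0 where z0: "norm z0 < 1" "blaschke d w z0 = z0" by auto
  have nz: "norm (-z0) < 1" using z0 by simp
  show "elliptic (blaschke d w)" unfolding elliptic_def
  proof (intro bexI[of _ z0] ballI)
    show "z0 \<in> ball 0 1" using z0 by simp
    fix z :: complex assume "z \<in> ball 0 1"
    hence z: "norm z < 1" by simp
    have t: "(\<lambda>n. (conjf d w z0 ^^ n) (mob z0 z)) \<longlonglongrightarrow> 0"
      using iter_to_zero[OF conjf_basic(2)[OF assms(1) z0(1) d1] conjf_strict(1)[OF assms(1) z0(1) assms(2) z0(2)]
          conjf_strict(2)[OF assms(1) z0(1) assms(2) z0(2)] mob_in[OF z0(1) z]] .
    have ic: "isCont (mob (-z0)) 0"
      using holomorphic_on_imp_continuous_on[OF mob_holo[OF nz]]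
      by (simp add: continuous_on_eq_continuous_at)
    have "(\<lambda>n. mob (-z0) ((conjf d w z0 ^^ n) (mob z0 z))) \<longlonglongrightarrow> mob (-z0) 0"
      using isCont_tendsto_compose[OF ic t] .
    moreover have "mob (-z0) 0 = z0" by (simp add: mob_zero)
    ultimately show "(\<lambda>n. (blaschke d w ^^ n) z) \<longlonglongrightarrow> z0"
      using iter_conj[OF assms(1) z0(1) d1 z] by simp
  qed
qed

lemma fixpt_unique:
  assumes "norm w < 1" "d \<ge> 2" "norm z0 < 1" "blaschke d w z0 = z0" "norm z1 < 1" "blaschke d w z1 = z1"
  shows "z1 = z0"
proof (rule ccontr)
  assume ne: "z1 \<noteq> z0"
  define y where "y = mob z0 z1"
  have y: "norm y < 1" using mob_in assms y_def by simp
  have "y \<noteq> 0"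
  proof
    assume "y = 0"
    hence "mob (-z0) y = z0" by (simp add: mob_zero)
    thus False using mob_inv[OF assms(3), of z1] assms ne y_def by simp
  qed
  moreover have "conjf d w z0 y = y"
    unfolding conjf_def y_def using mob_inv[OF assms(3), of z1] assms by simp
  ultimately show False using conjf_strict(2)[OF assms(1,3,2,4) y] by simp
qed


lemma lin_solve:
  fixes v w c :: complex
  assumes "norm v < 1"
  shows "w - cnj w * v = c \<longleftrightarrow> w = (c + v * cnj c) / (1 - v * cnj v)"
proof -
  have nz: "1 - v * cnj v \<noteq> 0"
  proof
    assume "1 - v * cnj v = 0"
    hence "v * cnj v = 1" by simp
    hence "norm v * norm v = 1" by (metis complex_mod_cnj norm_mult norm_one)
    thus False using sq_lt1[of "norm v"] assms by simp
  qed
  have ccnj: "cnj (1 - v * cnj v) = 1 - v * cnj v" by simp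
  show ?thesis
  proof
    assume h: "w - cnj w * v = c"
    have hc: "cnj c = cnj w - w * cnj v" using h[symmetric] by simp
    have "c + v * cnj c = w * (1 - v * cnj v)" unfolding hc h[symmetric] by (simp add: algebra_simps)
    thus "w = (c + v * cnj c) / (1 - v * cnj v)" using nz by (simp add: field_simps)
  next
    assume h: "w = (c + v * cnj c) / (1 - v * cnj v)"
    hence h1: "w * (1 - v * cnj v) = c + v * cnj c" using nz by (simp add: field_simps)
    hence "cnj (w * (1 - v * cnj v)) = cnj (c + v * cnj c)" by simp
    hence h2: "cnj w * (1 - v * cnj v) = cnj c + cnj v * c" by (simp add: algebra_simps)
    have "(w - cnj w * v) * (1 - v * cnj v) = w * (1 - v * cnj v) - v * (cnj w * (1 - v * cnj v))"
      by (simp add: algebra_simps)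
    also have "\<dots> = c * (1 - v * cnj v)" unfolding h1 h2 by (simp add: algebra_simps)
    finally show "w - cnj w * v = c" using nz by simp
  qed
qed


definition Psi :: "nat \<Rightarrow> complex \<Rightarrow> complex" where
  "Psi d u = (u^d - u * of_real (\<Sum>i<d. ((norm u)^2)^i)) / of_real (\<Sum>i<Suc d. ((norm u)^2)^i)"

lemma Q_pos: "(\<Sum>i<Suc d. ((x::real)^2)^i) \<ge> 1"
proof -
  have "(\<Sum>i<Suc d. (x^2)^i) = 1 + (\<Sum>i<d. (x^2)^Suc i)"
    unfolding sum.lessThan_Suc_shift by simp
  moreover have "(\<Sum>i<d. (x^2)^Suc i) \<ge> 0" by (intro sum_nonneg) simp
  ultimately show ?thesis by simp
qed

lemma Psi_alt:
  assumes "norm u < 1"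
  shows "((u^d - u) + u^Suc d * cnj (u^d - u)) / (1 - u^Suc d * cnj (u^Suc d)) = Psi d u"
proof -
  define S where "S = u * cnj u"
  have S: "of_real ((norm u)^2) = S" unfolding S_def by (rule complex_norm_square)
  define P where "P = (\<Sum>i<d. S^i)"
  define Q where "Q = (\<Sum>i<Suc d. S^i)"
  have PQ: "of_real (\<Sum>i<d. ((norm u)^2)^i) = P" "of_real (\<Sum>i<Suc d. ((norm u)^2)^i) = Q"
    unfolding P_def Q_def of_real_sum by (simp_all only: of_real_power[of "(norm u)^2"] S)
  have Qnz: "Q \<noteq> 0" using Q_pos[of "norm u" d] PQ(2) by (metis not_one_le_zero of_real_eq_0_iff)
  have S1: "1 - S \<noteq> 0"
  proof
    assume "1 - S = 0"
    hence "of_real ((norm u)^2) = (1::complex)" using S by simp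
    hence "(norm u)^2 = 1" using of_real_eq_1_iff by blast
    thus False using assms sq_lt1[of "norm u"] by (simp add: power2_eq_square)
  qed
  have e1: "1 - S^d = (1 - S) * P" unfolding P_def by (rule one_diff_power_eq)
  have e2: "1 - S^Suc d = (1 - S) * Q" unfolding Q_def by (rule one_diff_power_eq)
  have num: "(u^d - u) + u^Suc d * cnj (u^d - u) = (1 - S) * (u^d - u * P)"
  proof -
    have "(u^d - u) + u^Suc d * cnj (u^d - u) = u^d * (1 - S) - u * (1 - S^d)"
      unfolding S_def by (simp add: algebra_simps power_mult_distrib)
    thus ?thesis unfolding e1 by (simp add: algebra_simps)
  qed
  have den: "1 - u^Suc d * cnj (u^Suc d) = (1 - S) * Q"
  proof -
    have "u^Suc d * cnj (u^Suc d) = S^Suc d" unfolding S_def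
      by (simp only: power_mult_distrib complex_cnj_power)
    thus ?thesis using e2 by simp
  qed
  show ?thesis unfolding num den Psi_def PQ using S1 Qnz by simp
qed


lemma fix_iff_Psi:
  assumes "norm w < 1" "norm u < 1"
  shows "blaschke d w (mob (-w) u) = mob (-w) u \<longleftrightarrow> w = Psi d u"
proof -
  have nw: "norm (-w) < 1" using assms by simp
  have b: "blaschke d w (mob (-w) u) = u^d"
    unfolding bl_mob using mob_inv[OF nw, of u] assms by simp
  have D: "1 + cnj w * u \<noteq> 0" using denom_nz[OF nw, of u] assms by simp
  have m: "mob (-w) u = (u + w) / (1 + cnj w * u)" by (simp add: mob_def)
  have nv: "norm (u^Suc d) < 1" unfolding norm_power using assms
    by (simp only: power_less_one_iff norm_ge_zero) simp
  have "blaschke d w (mob (-w) u) = mob (-w) u \<longleftrightarrow> u^d * (1 + cnj w * u) = u + w"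
    unfolding b unfolding m using D by (simp add: field_simps)
  also have "\<dots> \<longleftrightarrow> w - cnj w * u^Suc d = u^d - u" by (auto simp: algebra_simps)
  also have "\<dots> \<longleftrightarrow> w = ((u^d - u) + u^Suc d * cnj (u^d - u)) / (1 - u^Suc d * cnj (u^Suc d))"
    by (rule lin_solve[OF nv])
  also have "\<dots> \<longleftrightarrow> w = Psi d u" using Psi_alt[OF assms(2)] by simp
  finally show ?thesis .
qed


lemma Psi_in:
  assumes "norm u < 1" "d \<ge> 1"
  shows "norm (Psi d u) < 1"
proof -
  define r where "r = norm u"
  have r: "0 \<le> r" "r < 1" using assms r_def by auto
  define P where "P = (\<Sum>i<d. (r^2)^i)"
  define Q where "Q = (\<Sum>i<Suc d. (r^2)^i)"
  have P0: "P \<ge> 0" unfolding P_def by (intro sum_nonneg) simp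
  have Q1: "Q \<ge> 1" unfolding Q_def by (rule Q_pos)
  define a where "a = r^d"
  have a: "0 \<le> a" "a < 1" using r assms(2) unfolding a_def by (auto simp: power_less_one_iff)
  have eP: "P * (1 - r^2) = 1 - a * a" unfolding P_def a_def
    using one_diff_power_eq[of "r^2" d] by (simp add: algebra_simps power_mult[symmetric] power2_eq_square power_mult_distrib)
  have eQ: "Q * (1 - r^2) = 1 - a * a * r * r" unfolding Q_def a_def
    using one_diff_power_eq[of "r^2" "Suc d"] by (simp add: algebra_simps power_mult[symmetric] power2_eq_square power_mult_distrib)
  have pos: "(1 - r) * (1 - a) * (1 - a * r) > 0"
  proof -
    have "a * r \<le> a" using r a by (simp add: mult_left_le)
    thus ?thesis using r a by (intro mult_pos_pos) auto
  qed
  have "(a + r * P) * (1 - r^2) < Q * (1 - r^2)"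
  proof -
    have "Q * (1 - r^2) - (a + r * P) * (1 - r^2) = Q * (1 - r^2) - a * (1 - r^2) - r * (P * (1 - r^2))"
      by (simp add: algebra_simps)
    also have "\<dots> = (1 - a * a * r * r) - a * (1 - r^2) - r * (1 - a * a)" unfolding eP eQ ..
    also have "\<dots> = (1 - r) * (1 - a) * (1 - a * r)" by (simp add: algebra_simps power2_eq_square)
    finally have "Q * (1 - r^2) - (a + r * P) * (1 - r^2) = (1 - r) * (1 - a) * (1 - a * r)" .
    thus ?thesis using pos by simp
  qed
  moreover have "1 - r^2 > 0" using r sq_lt1[of r] by (simp add: power2_eq_square)
  ultimately have lt: "a + r * P < Q" by simp
  have "norm (u^d - u * of_real P) \<le> a + r * P"
    using norm_triangle_ineq4[of "u^d" "u * of_real P"] P0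
    by (simp add: a_def r_def norm_power norm_mult)
  hence "norm (u^d - u * of_real P) < Q" using lt by simp
  moreover have "Psi d u = (u^d - u * of_real P) / of_real Q" unfolding Psi_def P_def Q_def r_def ..
  ultimately show ?thesis using Q1 by (simp add: norm_divide divide_less_eq)
qed


definition Efix :: "nat \<Rightarrow> complex set" where
  "Efix d = {w \<in> ball 0 1. \<exists>z\<in>ball 0 1. blaschke d w z = z}"

lemma Efix_Psi: assumes "d \<ge> 2" shows "Efix d = Psi d ` ball 0 1"
proof
  show "Efix d \<subseteq> Psi d ` ball 0 1"
  proof
    fix w assume "w \<in> Efix d"
    then obtain z where w: "norm w < 1" and z: "norm z < 1" "blaschke d w z = z"
      unfolding Efix_def by auto
    define u where "u = mob w z"
    have u: "norm u < 1" using mob_in w z u_def by simp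
    have "mob (-w) u = z" using mob_inv[OF w, of z] z u_def by simp
    hence "w = Psi d u" using fix_iff_Psi[OF w u] z by simp
    thus "w \<in> Psi d ` ball 0 1" using u by auto
  qed
next
  show "Psi d ` ball 0 1 \<subseteq> Efix d"
  proof
    fix w assume "w \<in> Psi d ` ball 0 1"
    then obtain u where u: "norm u < 1" and w: "w = Psi d u" by auto
    have wn: "norm w < 1" using Psi_in[OF u] assms w by simp
    have "norm (-w) < 1" using wn by simp
    hence "norm (mob (-w) u) < 1" using mob_in u by blast
    moreover have "blaschke d w (mob (-w) u) = mob (-w) u" using fix_iff_Psi[OF wn u] w by simp
    ultimately show "w \<in> Efix d" unfolding Efix_def using wn by auto
  qed
qed

lemma Psi_inj: assumes "d \<ge> 2" shows "inj_on (Psi d) (ball 0 1)"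
proof
  fix u1 u2 assume u: "u1 \<in> ball 0 1" "u2 \<in> ball 0 1" and e: "Psi d u1 = Psi d u2"
  define w where "w = Psi d u1"
  have u': "norm u1 < 1" "norm u2 < 1" using u by auto
  have wn: "norm w < 1" using Psi_in[OF u'(1)] assms w_def by simp
  have nw: "norm (-w) < 1" using wn by simp
  have f1: "blaschke d w (mob (-w) u1) = mob (-w) u1" using fix_iff_Psi[OF wn u'(1)] w_def by simp
  have f2: "blaschke d w (mob (-w) u2) = mob (-w) u2" using fix_iff_Psi[OF wn u'(2)] w_def e by simp
  have "mob (-w) u2 = mob (-w) u1"
    using fixpt_unique[OF wn assms _ f1 _ f2] mob_in[OF nw] u' by blast
  hence "mob (-(-w)) (mob (-w) u2) = mob (-(-w)) (mob (-w) u1)" by simp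
  thus "u1 = u2" using mob_inv[OF nw] u' by simp
qed

lemma Psi_cont: "continuous_on S (Psi d)"
proof -
  have "\<And>u. of_real (\<Sum>i<Suc d. ((norm u)^2)^i) \<noteq> (0::complex)"
    using Q_pos by (metis not_one_le_zero of_real_eq_0_iff)
  thus ?thesis unfolding Psi_def[abs_def] by (intro continuous_intros) auto
qed


lemma frontier_Psi:
  assumes d: "d \<ge> 2"
  shows "top_of_set (cball 0 1) frontier_of (Psi d ` ball 0 1) = Psi d ` sphere 0 1"
proof -
  define E where "E = Psi d ` ball 0 1"
  obtain g where hom: "homeomorphism (ball 0 1) E (Psi d) g"
    using invariance_of_domain_homeomorphism[of "ball (0::complex) 1" "Psi d"] Psi_cont Psi_inj[OF d]
    unfolding E_def by auto
  have openE: "open E" unfolding E_def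
    by (rule invariance_of_domain[OF Psi_cont open_ball Psi_inj[OF d]])
  have EB: "E \<subseteq> ball 0 1" unfolding E_def using Psi_in d by auto
  have disj: "Psi d z \<notin> E" if z: "norm z = 1" for z
  proof
    assume "Psi d z \<in> E"
    then obtain u0 where u0: "norm u0 < 1" "Psi d z = Psi d u0" unfolding E_def by auto
    define F where "F = at z within ball (0::complex) 1"
    have nt: "F \<noteq> bot" unfolding F_def using z
      by (simp add: trivial_limit_within islimpt_ball)
    have ev: "\<forall>\<^sub>F u in F. u \<in> ball 0 1" unfolding F_def by (simp add: eventually_at_filter)
    have t1: "(Psi d \<longlongrightarrow> Psi d z) F" unfolding F_def
    proof (rule Lim_at_imp_Lim_at_within)
      show "(Psi d \<longlongrightarrow> Psi d z) (at z)" using Psi_cont[of UNIV d] by (simp add: continuous_on_def)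
    qed
    have gc: "continuous_on E g" using hom by (simp add: homeomorphism_def)
    have t2: "((\<lambda>x. g (Psi d x)) \<longlongrightarrow> g (Psi d z)) F"
    proof (rule continuous_on_tendsto_compose[OF gc t1])
      show "Psi d z \<in> E" using u0 E_def by auto
      show "\<forall>\<^sub>F x in F. Psi d x \<in> E" using ev unfolding E_def by (rule eventually_mono) auto
    qed
    have gu0: "g (Psi d z) = u0" using hom u0 by (simp add: homeomorphism_def)
    have "((\<lambda>u. u) \<longlongrightarrow> u0) F"
    proof (rule Lim_transform_eventually[OF t2[unfolded gu0]])
      show "\<forall>\<^sub>F u in F. g (Psi d u) = u"
        using ev by (rule eventually_mono) (use hom in \<open>simp add: homeomorphism_def\<close>)
    qed
    moreover have "((\<lambda>u. u) \<longlongrightarrow> z) F" unfolding F_def by (rule tendsto_ident_at)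
    ultimately have "u0 = z" using tendsto_unique[OF nt] by blast
    thus False using u0 z by simp
  qed
  have cl: "closure E = Psi d ` cball 0 1"
  proof
    have "compact (Psi d ` cball 0 1)" by (intro compact_continuous_image Psi_cont compact_cball)
    hence "closed (Psi d ` cball 0 1)" by (rule compact_imp_closed)
    moreover have "E \<subseteq> Psi d ` cball 0 1" unfolding E_def by auto
    ultimately show "closure E \<subseteq> Psi d ` cball 0 1" by (rule closure_minimal[rotated])
  next
    have "Psi d ` closure (ball 0 1) \<subseteq> closure E"
      by (rule image_closure_subset[OF Psi_cont closed_closure]) (simp add: E_def closure_subset)
    thus "Psi d ` cball 0 1 \<subseteq> closure E" by simp
  qed
  have cb: "cball (0::complex) 1 = ball 0 1 \<union> sphere 0 1" by auto
  have Pc: "Psi d ` cball 0 1 \<subseteq> cball 0 1"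
  proof -
    have "closure E \<subseteq> closure (ball 0 1)" using EB by (rule closure_mono)
    thus ?thesis using cl by simp
  qed
  have clo: "top_of_set (cball 0 1) closure_of E = Psi d ` cball 0 1"
  proof -
    have "cball 0 1 \<inter> E = E" using EB by auto
    thus ?thesis using cl Pc by (simp add: closure_of_subtopology Int_absorb1)
  qed
  have "openin (top_of_set (cball 0 1)) E"
    using openin_open_Int[OF openE, of "cball 0 1"] EB by (simp add: Int_absorb1 subset_trans[OF EB ball_subset_cball])
  hence int: "top_of_set (cball 0 1) interior_of E = E" by (rule interior_of_openin)
  have "top_of_set (cball 0 1) frontier_of E = Psi d ` cball 0 1 - E"
    unfolding frontier_of_def clo int ..
  also have "\<dots> = Psi d ` sphere 0 1" using disj unfolding cb E_def by (auto, metis mem_Collect_eq ball_def dist_0_norm imageI)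
  finally show ?thesis unfolding E_def .
qed


lemma epi_Psi: "epicycloid d = Psi d ` sphere 0 1"
proof -
  have P1: "Psi d u = (u^d - of_nat d * u) / (of_nat d + 1)" if "norm u = 1" for u
    using that by (simp add: Psi_def algebra_simps)
  have "epicycloid d = (\<lambda>\<theta>. Psi d (cis \<theta>)) ` {0..2*pi}"
    unfolding epicycloid_def using P1 by (simp add: Complex.DeMoivre)
  also have "\<dots> = Psi d ` (cis ` {0..2*pi})" by (simp add: image_image)
  also have "cis ` {0..2*pi} = sphere 0 1"
  proof
    show "cis ` {0..2*pi} \<subseteq> sphere 0 1" by auto
    show "sphere 0 1 \<subseteq> cis ` {0..2*pi}"
    proof
      fix u :: complex assume "u \<in> sphere 0 1"
      hence u: "norm u = 1" by simp
      have "u = cis (Arg2pi u)" using Arg2pi[of u] u by (simp add: is_Arg_def cis_conv_exp)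
      moreover have "Arg2pi u \<in> {0..2*pi}" using Arg2pi[of u] by simp
      ultimately show "u \<in> cis ` {0..2*pi}" by blast
    qed
  qed
  finally show ?thesis .
qed


lemma rot_Efix:
  assumes "d \<ge> 2" "\<omega> ^ (d - 1) = 1" "w \<in> Efix d"
  shows "\<omega> * w \<in> Efix d"
proof -
  have n\<omega>: "norm \<omega> = 1"
  proof -
    have "norm \<omega> ^ (d - 1) = 1" using assms(2) by (metis norm_one norm_power)
    hence "norm \<omega> ^ (d - 1) = 1 ^ (d - 1)" by simp
    thus ?thesis using power_eq_imp_eq_base[of "norm \<omega>" "d - 1" 1] assms(1) by simp
  qed
  have c\<omega>: "cnj \<omega> * \<omega> = 1" using complex_norm_square[of \<omega>] n\<omega> by (simp add: mult.commute)
  have dd: "d = Suc (d - 1)" using assms(1) by simp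
  have \<omega>d: "\<omega> ^ d = \<omega>"
  proof -
    have "\<omega> ^ d = \<omega> * \<omega> ^ (d - 1)" by (subst dd) (simp only: power_Suc)
    thus ?thesis using assms(2) by simp
  qed
  obtain z where w: "norm w < 1" and z: "norm z < 1" "blaschke d w z = z"
    using assms(3) unfolding Efix_def by auto
  have "blaschke d (\<omega> * w) (\<omega> * z) = \<omega> ^ d * blaschke d w z"
  proof -
    have "(\<omega> * z - \<omega> * w) / (1 - cnj (\<omega> * w) * (\<omega> * z)) = \<omega> * ((z - w) / (1 - cnj w * z))"
    proof -
      have "1 - cnj (\<omega> * w) * (\<omega> * z) = 1 - (cnj \<omega> * \<omega>) * cnj w * z" by (simp add: algebra_simps)
      thus ?thesis using c\<omega> by (simp add: algebra_simps)
    qed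
    thus ?thesis unfolding blaschke_def by (simp only: power_mult_distrib)
  qed
  hence "blaschke d (\<omega> * w) (\<omega> * z) = \<omega> * z" using \<omega>d z by simp
  moreover have "norm (\<omega> * w) < 1" "norm (\<omega> * z) < 1" using w z n\<omega> by (simp_all add: norm_mult)
  ultimately show ?thesis unfolding Efix_def by auto
qed

lemma ellip_set_eq: assumes "d \<ge> 2" shows "ellip_set d = sector d \<inter> Efix d"
  unfolding ellip_set_def Efix_def sector_def using elliptic_iff[OF _ assms] by auto


lemma tilde_eq: assumes d: "d \<ge> 2" shows "ellip_tilde d = Efix d"
proof -
  define s where "s = 2 * pi / (real d - 1)"
  have dpos: "real d - 1 > 0" using d by simp
  have spos: "s > 0" unfolding s_def using dpos by simp
  have ang: "2 * pi * real j / (real d - 1) = real j * s" for j unfolding s_def by simp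
  have root: "cis (x * s) ^ (d - 1) = 1" if "x \<in> \<int>" for x
  proof -
    have e: "real (d - 1) = real d - 1" using d by (simp add: of_nat_diff)
    have "cis (x * s) ^ (d - 1) = cis (real (d - 1) * (x * s))" by (rule Complex.DeMoivre)
    also have "real (d - 1) * (x * s) = 2 * pi * x" unfolding e s_def using dpos by simp
    also have "cis (2 * pi * x) = 1" using that by simp
    finally show ?thesis .
  qed
  show ?thesis
  proof
    show "ellip_tilde d \<subseteq> Efix d"
    proof
      fix x assume "x \<in> ellip_tilde d"
      then obtain j w where j: "j \<in> {0..d-2}" and w: "w \<in> ellip_set d" and x: "x = cis (real j * s) * w"
        unfolding ellip_tilde_def ang by auto
      have "w \<in> Efix d" using w ellip_set_eq[OF d] by auto
      moreover have "cis (real j * s) ^ (d - 1) = 1" using root[of "real j"] by simp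
      ultimately show "x \<in> Efix d" using rot_Efix[OF d] x by blast
    qed
  next
    show "Efix d \<subseteq> ellip_tilde d"
    proof
      fix w assume wE: "w \<in> Efix d"
      define t where "t = Arg2pi w"
      have t: "0 \<le> t" "t < 2 * pi" "w = of_real (norm w) * cis t"
        using Arg2pi[of w] unfolding t_def by (auto simp: is_Arg_def cis_conv_exp)
      define k where "k = \<lfloor>t / s\<rfloor>"
      have k0: "0 \<le> k" unfolding k_def using t spos by simp
      have k1: "of_int k * s \<le> t" "t < (of_int k + 1) * s"
      proof -
        have "of_int k \<le> t / s" "t / s < of_int k + 1" unfolding k_def by linarith+
        thus "of_int k * s \<le> t" "t < (of_int k + 1) * s" using spos by (simp_all add: field_simps)
      qed
      have ts: "t / s = t * (real d - 1) / (2 * pi)" unfolding s_def by simp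
      have "t * (real d - 1) < 2 * pi * (real d - 1)" using t(2) dpos by simp
      hence "t / s < real d - 1" unfolding ts by (simp add: divide_less_eq mult.commute)
      hence "k < int d - 1" unfolding k_def by linarith
      define j where "j = nat k"
      have jr: "real j = of_int k" unfolding j_def using k0 by simp
      have jd: "j \<in> {0..d-2}" unfolding j_def using \<open>k < int d - 1\<close> k0 d by auto
      define t' where "t' = t - real j * s"
      have t': "0 \<le> t'" "t' < s" unfolding t'_def jr using k1 by (auto simp: algebra_simps)
      define w' where "w' = of_real (norm w) * cis t'"
      have nw': "norm w' = norm w" unfolding w'_def by (simp add: norm_mult)
      have ww': "w = cis (real j * s) * w'"
        unfolding w'_def t'_def by (subst t(3)) (simp add: cis_mult)
      have "w' = cis (- (real j * s)) * w" unfolding ww' by (simp add: cis_mult)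
      also have "cis (- (real j * s)) = cis ((- real j) * s)" by simp
      finally have w'r: "w' = cis ((- real j) * s) * w" .
      have "w' \<in> Efix d" unfolding w'r
        by (rule rot_Efix[OF d root wE]) simp
      moreover have "w' \<in> sector d"
        unfolding sector_def using wE t' nw' unfolding Efix_def s_def w'_def by auto
      ultimately have "w' \<in> ellip_set d" using ellip_set_eq[OF d] by auto
      thus "w \<in> ellip_tilde d" unfolding ellip_tilde_def ang using jd ww' by blast
    qed
  qed
qed


theorem theorem2p1:
  fixes d :: nat
  assumes "d \<ge> 2"
  shows "(top_of_set (cball (0::complex) 1)) frontier_of (ellip_tilde d) = epicycloid d"
  unfolding tilde_eq[OF assms] Efix_Psi[OF assms] epi_Psi by (rule frontier_Psi[OF assms])

end
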